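(* Let $k\ge 1$ and let $G$ and $H$ be graphs with $\delta(G)\ge\delta(H)\ge k$. Then \[ \Gamma_{\times k,t}(G\times H)\ge\max\{\Gamma_{\times k,t}(G)\cdot\Gamma_t(H),\ \Gamma_{\times k,t}(H)\cdot\Gamma_t(G)\}. \]
   Context: For an integer $k\ge1$ and a graph $G$ with $\delta(G)\ge k$, a set $S\subseteq V(G)$ is a $k$-tuple total dominating set ($k$TDS) if $|N_G(x)\cap S|\ge k$ for every $x\in V(G)$, and $\Gamma_{\times k,t}(G)$ is the maximum cardinality of a minimal (with respect to inclusion) $k$TDS of $G$. $\Gamma_t(G)=\Gamma_{\times 1,t}(G)$ is the upper total domination number. The cross (direct) product $G\times H$ has vertex set $V(G)\times V(H)$, with $(g_1,h_1)\sim(g_2,h_2)$ iff $g_1g_2\in E(G)$ and $h_1h_2\in E(H)$. *)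

theory Defs
  imports Main
begin

definition graph :: "'a set \<Rightarrow> ('a \<Rightarrow> 'a \<Rightarrow> bool) \<Rightarrow> bool" where
  "graph V E \<longleftrightarrow> finite V \<and> V \<noteq> {} \<and>
     (\<forall>x y. E x y \<longrightarrow> x \<in> V \<and> y \<in> V) \<and>
     (\<forall>x y. E x y \<longrightarrow> E y x) \<and> (\<forall>x. \<not> E x x)"

definition nbhd :: "'a set \<Rightarrow> ('a \<Rightarrow> 'a \<Rightarrow> bool) \<Rightarrow> 'a \<Rightarrow> 'a set" where
  "nbhd V E x = {y \<in> V. E x y}"

definition min_degree :: "'a set \<Rightarrow> ('a \<Rightarrow> 'a \<Rightarrow> bool) \<Rightarrow> nat" where
  "min_degree V E = Min ((\<lambda>x. card (nbhd V E x)) ` V)"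

definition ktds :: "nat \<Rightarrow> 'a set \<Rightarrow> ('a \<Rightarrow> 'a \<Rightarrow> bool) \<Rightarrow> 'a set \<Rightarrow> bool" where
  "ktds k V E S \<longleftrightarrow> S \<subseteq> V \<and> (\<forall>x\<in>V. card (nbhd V E x \<inter> S) \<ge> k)"

definition minimal_ktds :: "nat \<Rightarrow> 'a set \<Rightarrow> ('a \<Rightarrow> 'a \<Rightarrow> bool) \<Rightarrow> 'a set \<Rightarrow> bool" where
  "minimal_ktds k V E S \<longleftrightarrow> ktds k V E S \<and> (\<forall>T. T \<subset> S \<longrightarrow> \<not> ktds k V E T)"

definition upper_ktds_num :: "nat \<Rightarrow> 'a set \<Rightarrow> ('a \<Rightarrow> 'a \<Rightarrow> bool) \<Rightarrow> nat" where
  "upper_ktds_num k V E = Max (card ` {S. minimal_ktds k V E S})"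

definition upper_total_dom_num :: "'a set \<Rightarrow> ('a \<Rightarrow> 'a \<Rightarrow> bool) \<Rightarrow> nat" where
  "upper_total_dom_num V E = upper_ktds_num 1 V E"

definition cross_vertices :: "'a set \<Rightarrow> 'b set \<Rightarrow> ('a \<times> 'b) set" where
  "cross_vertices VG VH = VG \<times> VH"

definition cross_edges :: "('a \<Rightarrow> 'a \<Rightarrow> bool) \<Rightarrow> ('b \<Rightarrow> 'b \<Rightarrow> bool) \<Rightarrow> ('a \<times> 'b) \<Rightarrow> ('a \<times> 'b) \<Rightarrow> bool" where
  "cross_edges EG EH p q \<longleftrightarrow> EG (fst p) (fst q) \<and> EH (snd p) (snd q)"

end

theory Submission
  imports Defs
begin

lemma nbhd_fin: "graph V E \<Longrightarrow> finite (nbhd V E x)"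
  unfolding graph_def nbhd_def by auto

lemma ktds_mono:
  assumes "graph V E" "ktds a V E T" "T \<subseteq> U" "U \<subseteq> V"
  shows "ktds a V E U"
  unfolding ktds_def
proof (intro conjI ballI)
  show "U \<subseteq> V" by fact
  fix x assume "x \<in> V"
  have "a \<le> card (nbhd V E x \<inter> T)" using assms(2) \<open>x\<in>V\<close> unfolding ktds_def by auto
  also have "\<dots> \<le> card (nbhd V E x \<inter> U)"
    by (rule card_mono) (use nbhd_fin[OF assms(1)] assms(3) in auto)
  finally show "a \<le> card (nbhd V E x \<inter> U)" .
qed

lemma exists_minimal:
  assumes "graph V E" "\<forall>x\<in>V. card (nbhd V E x) \<ge> a"
  shows "\<exists>S. minimal_ktds a V E S"
proof -
  have "ktds a V E V" using assms(2) unfolding ktds_def nbhd_def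
    by (simp add: Int_absorb2 subset_iff)
  then obtain S where S: "ktds a V E S" "\<forall>T. ktds a V E T \<longrightarrow> card S \<le> card T"
    using ex_has_least_nat[of "ktds a V E" V card] by blast
  have fS: "finite S" using S(1) assms(1) unfolding ktds_def graph_def
    using finite_subset by blast
  have "minimal_ktds a V E S"
    unfolding minimal_ktds_def
  proof (intro conjI allI impI notI)
    show "ktds a V E S" by fact
    fix T assume "T \<subset> S" "ktds a V E T"
    then have "card T < card S" using psubset_card_mono fS by blast
    with S(2) \<open>ktds a V E T\<close> show False by force
  qed
  then show ?thesis by blast
qed

lemma degree_ge:
  assumes "graph V E" "x \<in> V"
  shows "card (nbhd V E x) \<ge> min_degree V E"
  unfolding min_degree_def using assms unfolding graph_def by auto

lemma prod_nbhd:
  "nbhd (cross_vertices VG VH) (cross_edges EG EH) (g,h) \<inter> (S\<times>T)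
   = (nbhd VG EG g \<inter> S) \<times> (nbhd VH EH h \<inter> T)"
  unfolding nbhd_def cross_vertices_def cross_edges_def by auto

lemma witness:
  assumes "graph V E" "minimal_ktds a V E S" "s \<in> S"
  shows "\<exists>g\<in>V. s \<in> nbhd V E g \<and> card (nbhd V E g \<inter> S) \<le> a"
proof -
  have kS: "ktds a V E S" using assms(2) unfolding minimal_ktds_def by auto
  have "S - {s} \<subset> S" using assms(3) by auto
  then have "\<not> ktds a V E (S - {s})" using assms(2) unfolding minimal_ktds_def by auto
  moreover have "S - {s} \<subseteq> V" using kS unfolding ktds_def by auto
  ultimately obtain g where g: "g \<in> V" "card (nbhd V E g \<inter> (S - {s})) < a"
    unfolding ktds_def by force
  have ge: "card (nbhd V E g \<inter> S) \<ge> a" using kS g(1) unfolding ktds_def by auto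
  have fin: "finite (nbhd V E g \<inter> S)" using nbhd_fin[OF assms(1)] by auto
  have sn: "s \<in> nbhd V E g"
  proof (rule ccontr)
    assume "s \<notin> nbhd V E g"
    then have "nbhd V E g \<inter> (S - {s}) = nbhd V E g \<inter> S" by auto
    with g ge show False by auto
  qed
  have "nbhd V E g \<inter> (S - {s}) = (nbhd V E g \<inter> S) - {s}" by auto
  then have "card (nbhd V E g \<inter> (S - {s})) = card (nbhd V E g \<inter> S) - 1"
    using fin sn assms(3) by simp
  with g ge have "card (nbhd V E g \<inter> S) \<le> a" by linarith
  with g sn show ?thesis by blast
qed

lemma prod_minimal:
  assumes gG: "graph VG EG" and gH: "graph VH EH"
    and a: "a \<ge> 1" and b: "b \<ge> 1"
    and S: "minimal_ktds a VG EG S" and T: "minimal_ktds b VH EH T"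
  shows "minimal_ktds (a*b) (cross_vertices VG VH) (cross_edges EG EH) (S \<times> T)"
proof -
  have kS: "ktds a VG EG S" and kT: "ktds b VH EH T"
    using S T unfolding minimal_ktds_def by auto
  have kST: "ktds (a*b) (cross_vertices VG VH) (cross_edges EG EH) (S \<times> T)"
    unfolding ktds_def
  proof (intro conjI ballI)
    show "S \<times> T \<subseteq> cross_vertices VG VH"
      using kS kT unfolding ktds_def cross_vertices_def by auto
    fix x assume "x \<in> cross_vertices VG VH"
    then obtain g h where x: "x = (g,h)" "g \<in> VG" "h \<in> VH"
      unfolding cross_vertices_def by auto
    have "a \<le> card (nbhd VG EG g \<inter> S)" "b \<le> card (nbhd VH EH h \<inter> T)"
      using kS kT x unfolding ktds_def by auto
    then have "a*b \<le> card (nbhd VG EG g \<inter> S) * card (nbhd VH EH h \<inter> T)"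
      by (rule mult_le_mono)
    then show "a*b \<le> card (nbhd (cross_vertices VG VH) (cross_edges EG EH) x \<inter> S \<times> T)"
      unfolding x prod_nbhd card_cartesian_product .
  qed
  show ?thesis
    unfolding minimal_ktds_def
  proof (intro conjI allI impI notI)
    show "ktds (a*b) (cross_vertices VG VH) (cross_edges EG EH) (S \<times> T)" by fact
    fix U assume U: "U \<subset> S \<times> T" "ktds (a*b) (cross_vertices VG VH) (cross_edges EG EH) U"
    then obtain s t where st: "s \<in> S" "t \<in> T" "(s,t) \<notin> U" by auto
    obtain g where g: "g\<in>VG" "s \<in> nbhd VG EG g" "card (nbhd VG EG g \<inter> S) \<le> a"
      using witness[OF gG S st(1)] by blast
    obtain h where h: "h\<in>VH" "t \<in> nbhd VH EH h" "card (nbhd VH EH h \<inter> T) \<le> b"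
      using witness[OF gH T st(2)] by blast
    have gh: "(g,h) \<in> cross_vertices VG VH" using g h unfolding cross_vertices_def by auto
    have "a*b \<le> card (nbhd (cross_vertices VG VH) (cross_edges EG EH) (g,h) \<inter> U)"
      using U(2) gh unfolding ktds_def by blast
    also have "\<dots> \<le> card ((nbhd VG EG g \<inter> S) \<times> (nbhd VH EH h \<inter> T) - {(s,t)})"
    proof (rule card_mono)
      show "finite ((nbhd VG EG g \<inter> S) \<times> (nbhd VH EH h \<inter> T) - {(s,t)})"
        using nbhd_fin[OF gG] nbhd_fin[OF gH] by auto
      have "nbhd (cross_vertices VG VH) (cross_edges EG EH) (g,h) \<inter> U
            \<subseteq> nbhd (cross_vertices VG VH) (cross_edges EG EH) (g,h) \<inter> (S \<times> T)"
        using U(1) by auto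
      then show "nbhd (cross_vertices VG VH) (cross_edges EG EH) (g,h) \<inter> U
            \<subseteq> (nbhd VG EG g \<inter> S) \<times> (nbhd VH EH h \<inter> T) - {(s,t)}"
        unfolding prod_nbhd using st(3) by auto
    qed
    also have "\<dots> = card (nbhd VG EG g \<inter> S) * card (nbhd VH EH h \<inter> T) - 1"
      using nbhd_fin[OF gG] nbhd_fin[OF gH] g h st
      by (simp add: card_cartesian_product)
    also have "\<dots> \<le> a*b - 1"
      using g(3) h(3) mult_le_mono by (meson diff_le_mono)
    finally show False using a b
      by (metis One_nat_def Suc_le_eq diff_less le_less_trans less_irrefl mult_pos_pos zero_less_one)
  qed
qed

lemma upper_attained:
  assumes "graph V E" "\<forall>x\<in>V. card (nbhd V E x) \<ge> a"
  shows "\<exists>S. minimal_ktds a V E S \<and> card S = upper_ktds_num a V E"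
proof -
  have fin: "finite {S. minimal_ktds a V E S}"
    using assms(1) unfolding graph_def minimal_ktds_def ktds_def
    by (rule_tac finite_subset[of _ "Pow V"]) auto
  have ne: "{S. minimal_ktds a V E S} \<noteq> {}" using exists_minimal[OF assms] by auto
  have "upper_ktds_num a V E \<in> card ` {S. minimal_ktds a V E S}"
    unfolding upper_ktds_num_def using fin ne by (intro Max_in) auto
  then show ?thesis by auto
qed

lemma upper_ge:
  assumes "graph V E" "minimal_ktds a V E S"
  shows "card S \<le> upper_ktds_num a V E"
proof -
  have fin: "finite {S. minimal_ktds a V E S}"
    using assms(1) unfolding graph_def minimal_ktds_def ktds_def
    by (rule_tac finite_subset[of _ "Pow V"]) auto
  show ?thesis unfolding upper_ktds_num_def using fin assms(2) by (intro Max_ge) auto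
qed

lemma graph_cross: "graph VG EG \<Longrightarrow> graph VH EH \<Longrightarrow>
   graph (cross_vertices VG VH) (cross_edges EG EH)"
  unfolding graph_def cross_vertices_def cross_edges_def by auto

lemma one_side:
  assumes gG: "graph VG EG" and gH: "graph VH EH" and a: "a \<ge> 1" and b: "b \<ge> 1"
    and dG: "\<forall>x\<in>VG. card (nbhd VG EG x) \<ge> a"
    and dH: "\<forall>x\<in>VH. card (nbhd VH EH x) \<ge> b"
  shows "upper_ktds_num a VG EG * upper_ktds_num b VH EH
     \<le> upper_ktds_num (a*b) (cross_vertices VG VH) (cross_edges EG EH)"
proof -
  obtain S where S: "minimal_ktds a VG EG S" "card S = upper_ktds_num a VG EG"
    using upper_attained[OF gG dG] by blast
  obtain T where T: "minimal_ktds b VH EH T" "card T = upper_ktds_num b VH EH"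
    using upper_attained[OF gH dH] by blast
  have "minimal_ktds (a*b) (cross_vertices VG VH) (cross_edges EG EH) (S \<times> T)"
    by (rule prod_minimal[OF gG gH a b S(1) T(1)])
  from upper_ge[OF graph_cross[OF gG gH] this] S(2) T(2)
  show ?thesis by (simp add: card_cartesian_product)
qed

theorem mainTheorem14:
  fixes k :: nat
    and VG :: "'a set" and EG :: "'a \<Rightarrow> 'a \<Rightarrow> bool"
    and VH :: "'b set" and EH :: "'b \<Rightarrow> 'b \<Rightarrow> bool"
  assumes "k \<ge> 1"
    and "graph VG EG" and "graph VH EH"
    and "min_degree VG EG \<ge> min_degree VH EH"
    and "min_degree VH EH \<ge> k"
  shows "upper_ktds_num k (cross_vertices VG VH) (cross_edges EG EH)
           \<ge> max (upper_ktds_num k VG EG * upper_total_dom_num VH EH)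
                  (upper_ktds_num k VH EH * upper_total_dom_num VG EG)"
proof -
  have dG: "\<forall>x\<in>VG. card (nbhd VG EG x) \<ge> k"
    using degree_ge[OF assms(2)] assms(4,5) by (meson le_trans)
  have dH: "\<forall>x\<in>VH. card (nbhd VH EH x) \<ge> k"
    using degree_ge[OF assms(3)] assms(5) by (meson le_trans)
  have dG1: "\<forall>x\<in>VG. card (nbhd VG EG x) \<ge> 1" using dG assms(1) le_trans by blast
  have dH1: "\<forall>x\<in>VH. card (nbhd VH EH x) \<ge> 1" using dH assms(1) le_trans by blast
  have 1: "upper_ktds_num k VG EG * upper_ktds_num 1 VH EH
     \<le> upper_ktds_num (k*1) (cross_vertices VG VH) (cross_edges EG EH)"
    by (rule one_side[OF assms(2,3,1) _ dG dH1]) simp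
  have 2: "upper_ktds_num 1 VG EG * upper_ktds_num k VH EH
     \<le> upper_ktds_num (1*k) (cross_vertices VG VH) (cross_edges EG EH)"
    by (rule one_side[OF assms(2,3) _ assms(1) dG1 dH]) simp
  show ?thesis using 1 2 unfolding upper_total_dom_num_def by (simp add: mult.commute)
qed

end
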